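(* Let $(X_n)$ be the fractionally integrated noise F($d$) with $d\in(0,1/2)$, and let $k\ge1$. Define $a_{0,k}=1$ and $(a_{1,k},\dots,a_{k,k})$ by requiring that $-\sum_{j=1}^{k}a_{j,k}X_{k+1-j}$ is the orthogonal projection in $L^2$ of $X_{k+1}$ onto $\mathrm{span}\{X_1,\dots,X_k\}$. Then for every $j\in\{1,\dots,k\}$, $$a_{j,k}<a_j<0 .$$
   Context: Fractionally integrated noise F($d$), $d\in(0,1/2)$, is the stationary solution of $X_n=(1-B)^{-d}\varepsilon_n$. Here $B$ is the backward shift and $(\varepsilon_n)_{n\in\mathbb Z}$ is a sequence of uncorrelated random variables with mean $0$ and variance $\sigma_\varepsilon^2>0$. Equivalently, $X_n=\sum_{j\ge0}b_j\varepsilon_{n-j}$ with $b_j=\frac{\Gamma(j+d)}{\Gamma(j+1)\Gamma(d)}$, and $\varepsilon_n=\sum_{j\ge0}a_jX_{n-j}$ with $a_0=1$ and $a_j=\frac{\Gamma(j-d)}{\Gamma(j+1)\Gamma(-d)}$ for $j\ge1$. *)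

theory Defs
  imports "HOL-Analysis.Analysis"
begin

text \<open>MA(infinity) coefficients b_j of fractionally integrated noise F(d).\<close>
definition fi_b :: "real \<Rightarrow> nat \<Rightarrow> real" where
  "fi_b d j = Gamma (real j + d) / (Gamma (real j + 1) * Gamma d)"

text \<open>AR(infinity) coefficients a_j of F(d): a_0 = 1, a_j = Gamma(j-d)/(Gamma(j+1) Gamma(-d)).\<close>
definition fi_a :: "real \<Rightarrow> nat \<Rightarrow> real" where
  "fi_a d j = (if j = 0 then 1 else Gamma (real j - d) / (Gamma (real j + 1) * Gamma (- d)))"

text \<open>Autocovariance of X_n = sum_j b_j eps_(n-j), eps uncorrelated, mean 0, variance s2:
  Cov(X_(n+h), X_n) = s2 * sum_j b_j b_(j+h).\<close>
definition fi_acvf :: "real \<Rightarrow> real \<Rightarrow> nat \<Rightarrow> real" where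
  "fi_acvf d s2 h = s2 * (\<Sum>j. fi_b d j * fi_b d (j + h))"

text \<open>c 1, ..., c k are the coefficients such that - sum_(j=1..k) c_j X_(k+1-j) is the orthogonal
  projection in L2 of X_(k+1) onto span{X_1,...,X_k}: the residual
  X_(k+1) + sum_j c_j X_(k+1-j) is orthogonal to each X_(k+1-i), i = 1..k, i.e.
  gamma(i) + sum_j c_j gamma(|i-j|) = 0.\<close>
definition fi_proj_coeffs :: "real \<Rightarrow> real \<Rightarrow> nat \<Rightarrow> (nat \<Rightarrow> real) \<Rightarrow> bool" where
  "fi_proj_coeffs d s2 k c \<longleftrightarrow>
     (\<forall>i\<in>{1..k}. fi_acvf d s2 i +
        (\<Sum>j=1..k. c j * fi_acvf d s2 (nat \<bar>int i - int j\<bar>)) = 0)"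

end

theory Submission
  imports Defs "HOL-Real_Asymp.Real_Asymp"
begin

lemma not_int_aux: fixes d :: real assumes "0 < d" "d < 1/2" and "x \<in> \<int>"
  shows "x + d \<notin> \<int>"
proof
  assume "x + d \<in> \<int>"
  then have "(x + d) - x \<in> \<int>" using assms(3) by (intro Ints_diff)
  then have "d \<in> \<int>" by simp
  then obtain n where "d = of_int n" by (auto elim: Ints_cases)
  with assms show False by auto
qed

lemma notnp: fixes d :: real assumes "0 < d" "d < 1/2" and "x \<in> \<int>"
  shows "x + d \<notin> \<int>\<^sub>\<le>\<^sub>0" "x - d \<notin> \<int>\<^sub>\<le>\<^sub>0"
proof -
  show "x + d \<notin> \<int>\<^sub>\<le>\<^sub>0" using not_int_aux[OF assms] nonpos_Ints_Int by auto
  have "x - d \<notin> \<int>" proof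
    assume h: "x - d \<in> \<int>"
    have "d = x - (x - d)" by simp
    then have "d \<in> \<int>" using h assms(3) Ints_diff by metis
    then obtain n where "d = of_int n" by (auto elim: Ints_cases)
    with assms show False by auto
  qed
  then show "x - d \<notin> \<int>\<^sub>\<le>\<^sub>0" using nonpos_Ints_Int by auto
qed

lemma fi_b_0: "fi_b d 0 = 1" if "0 < d" for d :: real
proof -
  have "Gamma d > 0" using that by simp
  then show ?thesis by (simp add: fi_b_def)
qed

lemma fi_b_Suc: fixes d :: real assumes "0 < d" "d < 1/2"
  shows "fi_b d (Suc m) = fi_b d m * (real m + d) / (real m + 1)"
proof -
  have g1: "Gamma (real m + d + 1) = (real m + d) * Gamma (real m + d)"
    by (rule Gamma_plus1) (use assms in \<open>auto simp: nonpos_Ints_def\<close>)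
  have g2: "Gamma (real m + 1 + 1) = (real m + 1) * Gamma (real m + 1)"
    by (rule Gamma_plus1) (auto simp: nonpos_Ints_def)
  have "Gamma (real m + 1) > 0" "Gamma d > 0" using assms by auto
  then show ?thesis unfolding fi_b_def using g1 g2
    by (simp add: add_ac field_simps)
qed

lemma fi_b_pos: fixes d :: real assumes "0 < d" "d < 1/2" shows "fi_b d m > 0"
  using assms by (induction m) (auto simp: fi_b_0 fi_b_Suc)

lemma fi_b_dec: fixes d :: real assumes "0 < d" "d < 1/2" shows "fi_b d (m + h) \<le> fi_b d m"
proof (induction h)
  case (Suc h)
  have "fi_b d (Suc (m+h)) \<le> fi_b d (m+h)"
    using fi_b_pos[OF assms, of "m+h"] assms by (simp add: fi_b_Suc field_simps)
  then show ?case using Suc by simp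
qed simp

lemma fi_b_exp: fixes d :: real assumes "0 < d" "d < 1/2"
  shows "fi_b d m \<le> exp (-(1-d) * harm m)"
proof (induction m)
  case 0 then show ?case using assms by (simp add: fi_b_0 harm_altdef)
next
  case (Suc m)
  have "fi_b d (Suc m) = fi_b d m * (1 + (-(1-d)/(real m + 1)))"
    using assms by (simp add: fi_b_Suc field_simps)
  also have "\<dots> \<le> exp (-(1-d) * harm m) * exp (-(1-d)/(real m + 1))"
  proof (rule mult_mono)
    have "0 \<le> 1 + (-(1-d)/(real m + 1))" using assms by (simp add: field_simps)
    then show "0 \<le> 1 + (-(1-d)/(real m + 1))" .
  qed (use Suc fi_b_pos[OF assms, of m] assms
      exp_ge_add_one_self[of "-(1-d)/(real m + 1)"] in auto)
  also have "\<dots> = exp (-(1-d) * harm (Suc m))"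
    by (simp add: harm_Suc exp_add[symmetric] field_simps)
  finally show ?case .
qed

lemma fi_b_bound: fixes d :: real assumes "0 < d" "d < 1/2"
  shows "fi_b d m \<le> (real m + 1) powr (d - 1)"
proof -
  have "fi_b d m \<le> exp (-(1-d) * harm m)" by (rule fi_b_exp[OF assms])
  also have "\<dots> \<le> exp (-(1-d) * ln (real m + 1))"
    using ln_le_harm[of m] assms by (simp add: mult_left_mono)
  also have "\<dots> = (real m + 1) powr (d - 1)"
    by (simp add: powr_def algebra_simps)
  finally show ?thesis .
qed

definition SS :: "real \<Rightarrow> nat \<Rightarrow> real" where
  "SS d h = (\<Sum>j. fi_b d j * fi_b d (j + h))"

lemma summ_bb: fixes d :: real assumes "0 < d" "d < 1/2"
  shows "summable (\<lambda>m. fi_b d m * fi_b d (m + h))"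
proof (rule summable_comparison_test')
  have "summable (\<lambda>n. real n powr (2*d-2))" using assms by (simp add: summable_real_powr_iff)
  then have "summable (\<lambda>n. real (n+1) powr (2*d-2))" by (subst summable_iff_shift) 
  then show "summable (\<lambda>n. (real n + 1) powr (2*d-2))" by (simp add: add_ac)
  fix m :: nat
  have p: "fi_b d m > 0" "fi_b d (m+h) > 0" using fi_b_pos[OF assms] by auto
  have "fi_b d m * fi_b d (m + h) \<le> fi_b d m * fi_b d m"
    using p fi_b_dec[OF assms, of m h] by (simp add: mult_left_mono)
  also have "\<dots> \<le> (real m + 1) powr (d - 1) * (real m + 1) powr (d - 1)"
    using p fi_b_bound[OF assms, of m] by (intro mult_mono) auto
  also have "\<dots> = (real m + 1) powr (2*d-2)" by (simp add: powr_add[symmetric])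
  finally show "norm (fi_b d m * fi_b d (m + h)) \<le> (real m + 1) powr (2*d-2)"
    using p by simp
qed

lemma lim_bb: fixes d :: real assumes "0 < d" "d < 1/2"
  shows "(\<lambda>N. real N * fi_b d N * fi_b d (N + h)) \<longlonglongrightarrow> 0"
proof (rule tendsto_sandwich[of "\<lambda>_. 0" _ _ "\<lambda>N. (real N + 1) powr (2*d-1)"])
  show "((\<lambda>N. (real N + 1) powr (2*d-1)) \<longlongrightarrow> 0) sequentially"
    by (rule tendsto_neg_powr) (use assms in \<open>auto, real_asymp\<close>)
  show "\<forall>\<^sub>F n in sequentially. 0 \<le> real n * fi_b d n * fi_b d (n + h)"
  proof (intro always_eventually allI)
    fix n
    have "0 < fi_b d n" "0 < fi_b d (n+h)" using fi_b_pos[OF assms] by auto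
    then show "0 \<le> real n * fi_b d n * fi_b d (n + h)" by simp
  qed
  show "\<forall>\<^sub>F n in sequentially. real n * fi_b d n * fi_b d (n + h) \<le> (real n + 1) powr (2*d-1)"
  proof (intro always_eventually allI)
    fix m :: nat
    have p: "fi_b d m > 0" "fi_b d (m+h) > 0" using fi_b_pos[OF assms] by auto
    have "fi_b d m * fi_b d (m + h) \<le> fi_b d m * fi_b d m"
      using p fi_b_dec[OF assms, of m h] by (simp add: mult_left_mono)
    also have "\<dots> \<le> (real m + 1) powr (d - 1) * (real m + 1) powr (d - 1)"
      using p fi_b_bound[OF assms, of m] by (intro mult_mono) auto
    also have "\<dots> = (real m + 1) powr (2*d-2)" by (simp add: powr_add[symmetric])
    finally have "real m * (fi_b d m * fi_b d (m + h)) \<le> (real m + 1) * (real m + 1) powr (2*d-2)"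
      using p by (intro mult_mono) auto
    also have "\<dots> = (real m + 1) powr (2*d-1)"
      by (simp add: powr_add[symmetric] powr_mult_base)
    finally show "real m * fi_b d m * fi_b d (m + h) \<le> (real m + 1) powr (2*d-1)"
      by (simp add: mult.assoc)
  qed
qed simp

lemma partial_id: fixes d :: real assumes "0 < d" "d < 1/2"
  shows "(real h + 1 - d) * (\<Sum>m<N. fi_b d m * fi_b d (m + Suc h))
       - (real h + d) * (\<Sum>m<N. fi_b d m * fi_b d (m + h))
       + real N * fi_b d N * fi_b d (N + h) = 0"
proof (induction N)
  case (Suc N)
  define B where "B = fi_b d N"
  define C where "C = fi_b d (N + h)"
  define C1 where "C1 = fi_b d (N + Suc h)"
  have e1: "real (Suc N) * fi_b d (Suc N) = (real N + d) * B" unfolding B_def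
    using fi_b_Suc[OF assms, of N] by (simp add: field_simps)
  have e2: "(real N + real h + 1) * C1 = (real N + real h + d) * C"
    unfolding C_def C1_def using fi_b_Suc[OF assms, of "N+h"] by (simp add: field_simps)
  have e3: "fi_b d (Suc N + h) = C1" unfolding C1_def by simp
  have "(real h + 1 - d) * (B * C1) - (real h + d) * (B * C)
     + real (Suc N) * fi_b d (Suc N) * fi_b d (Suc N + h) - real N * B * C
     = B * ((real N + real h + 1) * C1 - (real N + real h + d) * C)"
    unfolding e3 e1 by (simp add: algebra_simps)
  then have key: "(real h + 1 - d) * (B * fi_b d (N + Suc h)) - (real h + d) * (B * C)
     + real (Suc N) * fi_b d (Suc N) * fi_b d (Suc N + h) - real N * B * C = 0"
    using e2 unfolding C1_def by simp
  show ?case using Suc key unfolding B_def C_def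
    by (simp only: sum.lessThan_Suc) (simp add: algebra_simps)
qed simp

lemma SS_rec: fixes d :: real assumes "0 < d" "d < 1/2"
  shows "(real h + 1 - d) * SS d (Suc h) = (real h + d) * SS d h"
proof -
  have l: "(\<lambda>N. (real h + 1 - d) * (\<Sum>m<N. fi_b d m * fi_b d (m + Suc h))
       - (real h + d) * (\<Sum>m<N. fi_b d m * fi_b d (m + h))
       + real N * fi_b d N * fi_b d (N + h)) \<longlonglongrightarrow>
       (real h + 1 - d) * SS d (Suc h) - (real h + d) * SS d h + 0"
    unfolding SS_def
    by (intro tendsto_intros lim_bb[OF assms] summable_LIMSEQ summ_bb[OF assms])
  have "(\<lambda>N::nat. 0::real) \<longlonglongrightarrow> (real h + 1 - d) * SS d (Suc h) - (real h + d) * SS d h + 0"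
    using l by (simp only: partial_id[OF assms])
  then have "(real h + 1 - d) * SS d (Suc h) - (real h + d) * SS d h + 0 = 0"
    using LIMSEQ_unique[OF tendsto_const] by metis
  then show ?thesis by simp
qed

lemma SS_pos: fixes d :: real assumes "0 < d" "d < 1/2" shows "SS d 0 > 0"
  unfolding SS_def
  by (rule suminf_pos2[of _ 0]) (use summ_bb[OF assms, of 0] fi_b_pos[OF assms] in auto)

definition ee :: "real \<Rightarrow> nat \<Rightarrow> nat \<Rightarrow> real" where
  "ee d i n = (if i \<le> n then fi_b d (n - i) else 0)"

lemma ee_sums_le: fixes d :: real assumes "0 < d" "d < 1/2" and "i \<le> j"
  shows "(\<lambda>n. ee d i n * ee d j n) sums SS d (j - i)"
proof -
  have "(\<lambda>n. ee d i (n + j) * ee d j (n + j)) = (\<lambda>n. fi_b d n * fi_b d (n + (j - i)))"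
    using assms(3) by (auto simp: ee_def mult.commute intro!: ext)
  moreover have "(\<lambda>n. fi_b d n * fi_b d (n + (j - i))) sums SS d (j - i)"
    unfolding SS_def by (rule summable_sums[OF summ_bb[OF assms(1,2)]])
  ultimately have "(\<lambda>n. ee d i (n + j) * ee d j (n + j)) sums SS d (j - i)" by simp
  then show ?thesis by (subst (asm) sums_zero_iff_shift) (auto simp: ee_def)
qed

lemma ee_sums: fixes d :: real assumes "0 < d" "d < 1/2"
  shows "(\<lambda>n. ee d i n * ee d j n) sums SS d (nat \<bar>int i - int j\<bar>)"
proof (cases "i \<le> j")
  case True
  then have "nat \<bar>int i - int j\<bar> = j - i" by simp
  then show ?thesis using ee_sums_le[OF assms True] by metis
next
  case False
  then have "nat \<bar>int i - int j\<bar> = i - j" by simp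
  moreover have "(\<lambda>n. ee d i n * ee d j n) = (\<lambda>n. ee d j n * ee d i n)" by (simp add: mult.commute)
  ultimately show ?thesis using ee_sums_le[OF assms, of j i] False by simp
qed

lemma toeplitz_inj: fixes d :: real and x :: "nat \<Rightarrow> real"
  assumes "0 < d" "d < 1/2"
    and h: "\<forall>i\<in>{1..k}. (\<Sum>j=1..k. x j * SS d (nat \<bar>int i - int j\<bar>)) = 0"
  shows "\<forall>j\<in>{1..k}. x j = 0"
proof -
  define y where "y n = (\<Sum>j=1..k. x j * ee d j n)" for n
  have sq: "(\<lambda>n. y n * y n) sums (\<Sum>i=1..k. \<Sum>j=1..k. x i * x j * SS d (nat \<bar>int i - int j\<bar>))"
  proof -
    have "(\<lambda>n. \<Sum>i=1..k. \<Sum>j=1..k. x i * x j * (ee d i n * ee d j n)) sums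
       (\<Sum>i=1..k. \<Sum>j=1..k. x i * x j * SS d (nat \<bar>int i - int j\<bar>))"
      by (intro sums_sum sums_mult ee_sums[OF assms(1,2)])
    moreover have "(\<lambda>n. \<Sum>i=1..k. \<Sum>j=1..k. x i * x j * (ee d i n * ee d j n)) = (\<lambda>n. y n * y n)"
      unfolding y_def by (auto simp: sum_product intro!: ext sum.cong)
    ultimately show ?thesis by simp
  qed
  have "(\<Sum>i=1..k. \<Sum>j=1..k. x i * x j * SS d (nat \<bar>int i - int j\<bar>))
      = (\<Sum>i=1..k. x i * (\<Sum>j=1..k. x j * SS d (nat \<bar>int i - int j\<bar>)))"
    by (simp add: sum_distrib_left mult.assoc)
  also have "\<dots> = 0" using h by simp
  finally have "(\<lambda>n. y n * y n) sums 0" using sq by simp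
  then have "\<forall>n. y n * y n = 0"
    using suminf_eq_zero_iff[of "\<lambda>n. y n * y n"] by (auto simp: sums_iff)
  then have y0: "y n = 0" for n by simp
  have "x n = 0" if "n \<in> {1..k}" for n
    using that
  proof (induction n rule: less_induct)
    case (less n)
    have "y n = x n * ee d n n + (\<Sum>j\<in>{1..k} - {n}. x j * ee d j n)"
      unfolding y_def using less.prems by (simp add: sum.remove)
    also have "(\<Sum>j\<in>{1..k} - {n}. x j * ee d j n) = 0"
    proof (rule sum.neutral, rule ballI)
      fix j assume j: "j \<in> {1..k} - {n}"
      show "x j * ee d j n = 0"
      proof (cases "j < n")
        case True then show ?thesis using less.IH[of j] j by simp
      next
        case False then show ?thesis using j by (simp add: ee_def)
      qed
    qed
    finally show ?case using y0[of n] assms by (simp add: ee_def fi_b_0)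
  qed
  then show ?thesis by blast
qed

definition hp :: "real \<Rightarrow> nat \<Rightarrow> nat \<Rightarrow> real" where
  "hp d k j = (\<Prod>m<j. -(real k - real m) * (real m - d) / ((real m + 1) * (d - real k + real m)))"

lemma d_nonint: fixes d :: real assumes "0 < d" "d < 1/2" shows "d + real_of_int z \<noteq> 0"
proof
  assume "d + real_of_int z = 0"
  then have "d = - real_of_int z" by simp
  show False
  proof (cases "z \<ge> 0")
    case True then have "real_of_int z \<ge> 0" by simp
    then show False using assms \<open>d = - real_of_int z\<close> by simp
  next
    case False then have "z \<le> -1" by simp
    then have "real_of_int z \<le> -1" by simp
    then show False using assms \<open>d = - real_of_int z\<close> by simp
  qed
qed

lemma d_nonint': fixes d :: real assumes "0 < d" "d < 1/2" shows "real_of_int z - d \<noteq> 0"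
  using d_nonint[OF assms, of "-z"] by simp

lemma hp_0: "hp d k 0 = 1" by (simp add: hp_def)

lemma hp_Suc: "hp d k (Suc j) = hp d k j * (-(real k - real j) * (real j - d) / ((real j + 1) * (d - real k + real j)))"
  by (simp add: hp_def)

lemma hp_rec: fixes d :: real assumes "0 < d" "d < 1/2"
  shows "(real j + 1) * (d - real k + real j) * hp d k (Suc j) = -(real k - real j) * (real j - d) * hp d k j"
proof -
  have "d - real k + real j \<noteq> 0" using d_nonint[OF assms, of "int j - int k"] by simp
  then have nz: "(real j + 1) * (d - real k + real j) \<noteq> 0" by simp
  have "\<And>C. (real j + 1) * (d - real k + real j) * (hp d k j * (C / ((real j + 1) * (d - real k + real j)))) = hp d k j * C"
    using nz by simp
  from this[of "-(real k - real j) * (real j - d)"] show ?thesis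
    unfolding hp_Suc by (simp add: mult_ac)
qed

lemma hp_zero: "hp d k (Suc k) = 0" by (simp add: hp_Suc)

definition ww :: "real \<Rightarrow> int \<Rightarrow> real" where "ww d z = SS d (nat \<bar>z\<bar>)"

lemma ww_rec: fixes d :: real assumes "0 < d" "d < 1/2"
  shows "(real_of_int z + 1 - d) * ww d (z + 1) = (real_of_int z + d) * ww d z"
proof (cases "z \<ge> 0")
  case True
  then obtain n where n: "z = int n" by (metis nonneg_eq_int)
  have "nat \<bar>int n + 1\<bar> = Suc n" by simp
  then show ?thesis unfolding ww_def n using SS_rec[OF assms, of n] by simp
next
  case False
  define n where "n = nat (- z - 1)"
  have n: "z = - int n - 1" unfolding n_def using False by simp
  have a: "nat \<bar>- int n - 1 + 1\<bar> = n" by simp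
  have b: "nat \<bar>- int n - 1\<bar> = Suc n" by simp
  show ?thesis unfolding ww_def n a b using SS_rec[OF assms, of n] by (simp add: algebra_simps)
qed

definition GG :: "real \<Rightarrow> nat \<Rightarrow> nat \<Rightarrow> real" where
  "GG d k i = (\<Sum>j<Suc k. hp d k j * ww d (int i - int j))"

lemma term_alg:
  fixes a b d K P P1 W0 W1 :: real
  assumes hr': "(b + 1) * (d - K + b) * P1 = -(K - b) * (b - d) * P"
   and wr': "(a - b + 1 - d) * W1 = (a - b + d) * W0"
   and nz': "a - b + d \<noteq> 0"
  shows "(a + 1 - d) * (a - K) * (P * W1) - a * (a - K + d) * (P * W0)
     - ((- (b + 1)) * (d - K + (b + 1) - 1) * P1 * W0 - (- b * (d - K + b - 1) * P * W1)) = 0"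
proof -
  define E where "E = (a + 1 - d) * (a - K) * (P * W1) - a * (a - K + d) * (P * W0)
     - ((- (b + 1)) * (d - K + (b + 1) - 1) * P1 * W0 - (- b * (d - K + b - 1) * P * W1))"
  have E1: "E = P * (((a+1-d)*(a-K) - b*(d-K+b-1)) * W1 - (a*(a-K+d) + (K-b)*(b-d)) * W0)"
  proof -
    have "(- (b + 1)) * (d - K + (b + 1) - 1) * P1 * W0 = - ((b + 1) * (d - K + b) * P1) * W0"
      by (simp add: algebra_simps)
    also have "\<dots> = - (-(K - b) * (b - d) * P) * W0" using hr' by simp
    also have "\<dots> = (K - b) * (b - d) * P * W0" by (simp add: algebra_simps)
    finally show ?thesis unfolding E_def by (simp add: algebra_simps)
  qed
  have "(a - b + d) * E = P * (((a+1-d)*(a-K) - b*(d-K+b-1)) * ((a - b + d) * W1)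
       - (a*(a-K+d) + (K-b)*(b-d)) * ((a - b + d) * W0))"
    unfolding E1 by (simp add: algebra_simps)
  also have "\<dots> = P * W1 * (((a+1-d)*(a-K) - b*(d-K+b-1)) * (a - b + d)
       - (a*(a-K+d) + (K-b)*(b-d)) * (a - b + 1 - d))"
    unfolding wr'[symmetric] by (simp add: algebra_simps)
  also have "((a+1-d)*(a-K) - b*(d-K+b-1)) * (a - b + d)
       - (a*(a-K+d) + (K-b)*(b-d)) * (a - b + 1 - d) = 0"
    by (simp add: algebra_simps)
  finally have "E = 0" using nz' by simp
  then show ?thesis unfolding E_def .
qed

lemma term_id: fixes d :: real assumes "0 < d" "d < 1/2"
  shows "(real i + 1 - d) * (real i - real k) * (hp d k j * ww d (int (Suc i) - int j))
     - real i * (real i - real k + d) * (hp d k j * ww d (int i - int j))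
   - ((- (real j + 1)) * (d - real k + (real j + 1) - 1) * hp d k (Suc j) * ww d (int (Suc i) - int (Suc j))
     - (- real j * (d - real k + real j - 1) * hp d k j * ww d (int (Suc i) - int j))) = 0"
proof -
  define z where "z = int i - int j"
  have zr: "real_of_int z = real i - real j" unfolding z_def by simp
  define W0 where "W0 = ww d z"
  define W1 where "W1 = ww d (z + 1)"
  have i1: "int (Suc i) - int j = z + 1" unfolding z_def by simp
  have i2: "int (Suc i) - int (Suc j) = z" unfolding z_def by simp
  have wr: "(real i - real j + 1 - d) * W1 = (real i - real j + d) * W0"
    using ww_rec[OF assms, of z] unfolding W0_def W1_def zr by simp
  have nz: "real i - real j + d \<noteq> 0" using d_nonint[OF assms, of z] zr by (simp add: add.commute)
  have hr: "(real j + 1) * (d - real k + real j) * hp d k (Suc j) = -(real k - real j) * (real j - d) * hp d k j"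
    by (rule hp_rec[OF assms])
  have "(real i + 1 - d) * (real i - real k) * (hp d k j * W1) - real i * (real i - real k + d) * (hp d k j * W0)
     - ((- (real j + 1)) * (d - real k + (real j + 1) - 1) * hp d k (Suc j) * W0 - (- real j * (d - real k + real j - 1) * hp d k j * W1)) = 0"
    by (rule term_alg[OF hr wr nz])
  then show ?thesis unfolding i1 i2 z_def[symmetric] W0_def[symmetric] W1_def[symmetric] .
qed

lemma GG_rec: fixes d :: real assumes "0 < d" "d < 1/2"
  shows "(real i + 1 - d) * (real i - real k) * GG d k (Suc i) = real i * (real i - real k + d) * GG d k i"
proof -
  define Z where "Z j = - real j * (d - real k + real j - 1) * hp d k j * ww d (int (Suc i) - int j)" for j
  have "(real i + 1 - d) * (real i - real k) * GG d k (Suc i) - real i * (real i - real k + d) * GG d k i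
     = (\<Sum>j<Suc k. (real i + 1 - d) * (real i - real k) * (hp d k j * ww d (int (Suc i) - int j))
     - real i * (real i - real k + d) * (hp d k j * ww d (int i - int j)))"
    unfolding GG_def sum_distrib_left sum_subtractf by simp
  also have "\<dots> = (\<Sum>j<Suc k. Z (Suc j) - Z j)"
  proof (rule sum.cong)
    fix j
    have rs: "real (Suc j) = real j + 1" by simp
    have t: "(real i + 1 - d) * (real i - real k) * (hp d k j * ww d (int (Suc i) - int j))
     - real i * (real i - real k + d) * (hp d k j * ww d (int i - int j))
   - ((- (real j + 1)) * (d - real k + (real j + 1) - 1) * hp d k (Suc j) * ww d (int (Suc i) - int (Suc j))
     - (- real j * (d - real k + real j - 1) * hp d k j * ww d (int (Suc i) - int j))) = 0"
      by (rule term_id[OF assms])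
    show "(real i + 1 - d) * (real i - real k) * (hp d k j * ww d (int (Suc i) - int j))
     - real i * (real i - real k + d) * (hp d k j * ww d (int i - int j))
     = Z (Suc j) - Z j" unfolding Z_def rs using t by linarith
  qed simp
  also have "\<dots> = Z (Suc k) - Z 0" by (rule sum_lessThan_telescope)
  also have "\<dots> = 0" unfolding Z_def by (simp add: hp_zero)
  finally show ?thesis by simp
qed

lemma GG_zero: fixes d :: real assumes "0 < d" "d < 1/2" and "1 \<le> i" "i \<le> k"
  shows "GG d k i = 0"
  using assms(3,4)
proof (induction i rule: dec_induct)
  case base
  have "(real 0 + 1 - d) * (real 0 - real k) * GG d k (Suc 0) = real 0 * (real 0 - real k + d) * GG d k 0"
    by (rule GG_rec[OF assms(1,2)])
  then show ?case using assms by simp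
next
  case (step n)
  have "(real n + 1 - d) * (real n - real k) * GG d k (Suc n) = real n * (real n - real k + d) * GG d k n"
    by (rule GG_rec[OF assms(1,2)])
  then show ?case using step assms by simp
qed

lemma hosking: fixes d :: real assumes "0 < d" "d < 1/2" and "i \<in> {1..k}"
  shows "SS d i + (\<Sum>j=1..k. hp d k j * SS d (nat \<bar>int i - int j\<bar>)) = 0"
proof -
  have "GG d k i = 0" using GG_zero[OF assms(1,2)] assms(3) by auto
  moreover have "GG d k i = SS d i + (\<Sum>j=1..k. hp d k j * SS d (nat \<bar>int i - int j\<bar>))"
  proof -
    have e: "{..<Suc k} = insert 0 {1..k}" by auto
    have "GG d k i = hp d k 0 * ww d (int i - int 0) + (\<Sum>j=1..k. hp d k j * ww d (int i - int j))"
      unfolding GG_def e by (subst sum.insert) auto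
    then show ?thesis by (simp add: hp_0 ww_def)
  qed
  ultimately show ?thesis by simp
qed

lemma fi_a_Suc: fixes d :: real assumes "0 < d" "d < 1/2"
  shows "fi_a d (Suc j) = fi_a d j * (real j - d) / (real j + 1)"
proof -
  have gnz: "Gamma (- d) \<noteq> 0"
    by (rule Gamma_nonzero) (use notnp(2)[OF assms, of 0] in simp)
  show ?thesis
  proof (cases "j = 0")
    case True
    have "Gamma (- d + 1) = (- d) * Gamma (- d)"
      by (rule Gamma_plus1) (use notnp(2)[OF assms, of 0] in simp)
    then have "Gamma (1 - d) = - d * Gamma (- d)" by (simp add: add.commute)
    moreover have "Gamma (2::real) = 1" using Gamma_fact[of 1] by simp
    ultimately show ?thesis using True gnz by (simp add: fi_a_def)
  next
    case False
    have g1: "Gamma ((real j - d) + 1) = (real j - d) * Gamma (real j - d)"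
      by (rule Gamma_plus1) (use notnp(2)[OF assms, of "real j"] in simp)
    have g2: "Gamma (real j + 1 + 1) = (real j + 1) * Gamma (real j + 1)"
      by (rule Gamma_plus1) (auto simp: nonpos_Ints_def)
    have "Gamma (real j + 1) > 0" by simp
    then show ?thesis using False g1 g2 gnz unfolding fi_a_def
      by (simp add: add_ac field_simps)
  qed
qed

lemma ineq: fixes d :: real assumes "0 < d" "d < 1/2" and "1 \<le> j" "j \<le> k"
  shows "hp d k j < fi_a d j \<and> fi_a d j < 0"
  using assms(3,4)
proof (induction j rule: dec_induct)
  case base
  have h1: "hp d k 1 = real k * d / (d - real k)" by (simp add: hp_Suc hp_0)
  have a1: "fi_a d 1 = - d" using fi_a_Suc[OF assms(1,2), of 0] by (simp add: fi_a_def)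
  have "real k \<ge> 1" using base by simp
  then have "real k * d / (d - real k) < - d" using assms by (simp add: field_simps)
  then show ?case using h1 a1 assms by simp
next
  case (step j)
  have ih: "hp d k j < fi_a d j" "fi_a d j < 0" using step by auto
  define g where "g = (real j - d) / (real j + 1)"
  define r where "r = (real k - real j) / (real k - real j - d)"
  have kj: "real k - real j \<ge> 1" using step by simp
  have gpos: "g > 0" unfolding g_def using step assms by simp
  have r1: "r \<ge> 1" unfolding r_def using kj assms by (simp add: field_simps)
  have hs: "hp d k (Suc j) = hp d k j * g * r"
  proof -
    have e: "d - real k + real j = -(real k - real j - d)" by simp
    have "-(real k - real j) * (real j - d) / ((real j + 1) * (d - real k + real j))
        = ((real j - d) * (real k - real j)) / ((real j + 1) * (real k - real j - d))"
    proof -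
      have gen: "\<And>A B C D::real. -A*B/(C*(-D)) = (B*A)/(C*D)" by simp
      show ?thesis unfolding e by (rule gen)
    qed
    also have "\<dots> = g * r" unfolding g_def r_def by (simp add: times_divide_times_eq)
    finally show ?thesis unfolding hp_Suc by (simp add: mult.assoc)
  qed
  have as: "fi_a d (Suc j) = fi_a d j * g" unfolding g_def by (simp add: fi_a_Suc[OF assms(1,2)])
  have n1: "hp d k j * g < 0" using ih gpos by (simp add: mult_neg_pos)
  have "hp d k j * g * r \<le> hp d k j * g * 1" using n1 r1 by (intro mult_left_mono_neg) auto
  also have "\<dots> < fi_a d j * g" using ih gpos by simp
  finally have "hp d k (Suc j) < fi_a d (Suc j)" using hs as by simp
  moreover have "fi_a d (Suc j) < 0" using as ih gpos by (simp add: mult_neg_pos)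
  ultimately show ?case by simp
qed

theorem mainTheorem6:
  fixes d s2 :: real and k :: nat and c :: "nat \<Rightarrow> real"
  assumes "0 < d" and "d < 1/2" and "0 < s2" and "1 \<le> k"
    and "fi_proj_coeffs d s2 k c"
  shows "\<forall>j\<in>{1..k}. c j < fi_a d j \<and> fi_a d j < 0"
proof -
  have acv: "fi_acvf d s2 h = s2 * SS d h" for h unfolding fi_acvf_def SS_def ..
  have hc: "SS d i + (\<Sum>j=1..k. c j * SS d (nat \<bar>int i - int j\<bar>)) = 0" if "i \<in> {1..k}" for i
  proof -
    have "s2 * (SS d i + (\<Sum>j=1..k. c j * SS d (nat \<bar>int i - int j\<bar>))) = 0"
      using assms(5) that unfolding fi_proj_coeffs_def acv
      by (simp add: distrib_left sum_distrib_left mult_ac)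
    then show ?thesis using assms(3) by simp
  qed
  have "\<forall>i\<in>{1..k}. (\<Sum>j=1..k. (c j - hp d k j) * SS d (nat \<bar>int i - int j\<bar>)) = 0"
  proof
    fix i assume i: "i \<in> {1..k}"
    have "(\<Sum>j=1..k. (c j - hp d k j) * SS d (nat \<bar>int i - int j\<bar>))
       = (SS d i + (\<Sum>j=1..k. c j * SS d (nat \<bar>int i - int j\<bar>)))
         - (SS d i + (\<Sum>j=1..k. hp d k j * SS d (nat \<bar>int i - int j\<bar>)))"
      by (simp add: left_diff_distrib sum_subtractf)
    also have "\<dots> = 0" using hc[OF i] hosking[OF assms(1,2) i] by simp
    finally show "(\<Sum>j=1..k. (c j - hp d k j) * SS d (nat \<bar>int i - int j\<bar>)) = 0" .
  qed
  from toeplitz_inj[OF assms(1,2) this] have ce: "\<forall>j\<in>{1..k}. c j = hp d k j" by simp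
  show ?thesis using ce ineq[OF assms(1,2)] by auto
qed

end
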